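(* Let $\Delta$ be a balanced, non-degenerate, even multiset in $\mathbb{Z}^2\setminus\{(0,0)\}$ and let $\rho>0$ be such that, for each side $\sigma$ of $P_\Delta$, the complement in $\operatorname{Tor}^+_{\mathbb{R}}(\sigma)$ of the $\rho$-neighborhoods of its endpoints is non-empty. Then the metric closure $\overline{\operatorname{Men}}{}^\rho_{\mathbb{R}}(\Delta)$ of $\operatorname{Men}^\rho_{\mathbb{R}}(\Delta)$ in $\prod_{\sigma\in P^1_\Delta}(\operatorname{Tor}^+_{\mathbb{R}}(\sigma))^{n^\sigma}$ is diffeomorphic to a convex polytope.
   Context: Notation: $\Delta$ balanced (elements sum to $0$), non-degenerate (elements span $\mathbb{R}^2$), even ($\Delta\subset(2\mathbb{Z})^2$). $P_\Delta$ is the convex lattice polygon whose counterclockwise oriented boundary is obtained by concatenating the vectors of $\Delta$ rotated counterclockwise by $\pi/2$; $P^1_\Delta$ its set of sides; for $\sigma\in P^1_\Delta$, $\boldsymbol a^\sigma_1,\dots,\boldsymbol a^\sigma_{n^\sigma}$ are the elements of $\Delta$ that are outer normals to $\sigma$, with lattice lengths $2k^\sigma_i$. $\operatorname{Tor}(P_\Delta)$ is the complex toric surface with its tautological real structure; its closed positive quadrant $\operatorname{Tor}^+_{\mathbb{R}}(P_\Delta)$ (closure of $(\mathbb{R}_{>0})^2$) is identified with $P_\Delta$ by the moment map, and it carries the metric pulled back from $P_\Delta\subset\mathbb{R}^2$. For a side $\sigma$, $\operatorname{Tor}(\sigma)$ is its toric divisor, $\operatorname{Tor}(\sigma)^\times$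 the dense orbit, and $\operatorname{Tor}^+_{\mathbb{R}}(\sigma)=\operatorname{Tor}(\sigma)\cap\partial\operatorname{Tor}^+_{\mathbb{R}}(P_\Delta)$ (a closed segment). Fix a linear functional $\lambda:\mathbb{R}^2\to\mathbb{R}$ injective on $\mathbb{Z}^2$; its maximum and minimum points on $P_\Delta$ split $\partial P_\Delta$ into two broken lines $B',B''$, and orient each side from its $\lambda$-minimal to its $\lambda$-maximal point. An automorphism of $\mathbb{Z}^2$ sending an oriented side $\sigma$ onto the segment $[0,\|\sigma\|_{\mathbb{Z}}]$ of the first axis identifies $\operatorname{Tor}(\sigma)^\times$ with $\mathbb{C}^\times$, taking the positive real half-axis of $\operatorname{Tor}(\sigma)^\times$ (the interior of $\operatorname{Tor}^+_{\mathbb{R}}(\sigma)$) onto $\mathbb{R}_{>0}$; let $\xi^\sigma_i$ be the resulting coordinate of a point $z^\sigma_i\in\operatorname{Tor}(\sigma)^\times$. Let $k_0=\gcd\{k^\sigma_i\}$. $\operatorname{Men}(\Delta)_{red}$ is the set of sequences $(z^\sigma_i)$, $z^\sigma_i\in\operatorname{Tor}(\sigma)^\times$, with $\prod_{\sigma\subset B'}\prod_i(\xi^\sigma_i)^{k^\sigma_i/k_0}=\prod_{\sigma\subset B''}\prod_i(\xi^\sigma_i)^{k^\sigma_i/k_0}$. $\operatorname{Men}^\rho_{\mathbb{R}}(\Delta)$ is the set of sequences in $\operatorname{Men}(\Delta)_{red}$ such that every point $z^\sigma_i$ lies in $\operatorname{Tor}^+_{\mathbb{R}}(\sigma)$ at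 distance $\ge\rho$ from the endpoints of $\operatorname{Tor}^+_{\mathbb{R}}(\sigma)$. *)

theory Defs
  imports "HOL-Analysis.Analysis"
begin

definition partial_deriv :: "(real^'n \<Rightarrow> real) \<Rightarrow> 'n \<Rightarrow> real^'n \<Rightarrow> real" where
  "partial_deriv g i x = frechet_derivative g (at x) (axis i 1)"

coinductive smooth_scalar_on :: "(real^'n) set \<Rightarrow> (real^'n \<Rightarrow> real) \<Rightarrow> bool"
  for U where
  "\<lbrakk> \<forall>x\<in>U. g differentiable (at x); continuous_on U g;
     \<forall>i. smooth_scalar_on U (partial_deriv g i) \<rbrakk> \<Longrightarrow> smooth_scalar_on U g"

definition smooth_map_on :: "(real^'n) set \<Rightarrow> (real^'n \<Rightarrow> real^'m) \<Rightarrow> bool" where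
  "smooth_map_on U F \<longleftrightarrow> open U \<and> (\<forall>j. smooth_scalar_on U (\<lambda>x. F x $ j))"

definition smooth_on_set :: "(real^'n) set \<Rightarrow> (real^'n \<Rightarrow> real^'m) \<Rightarrow> bool" where
  "smooth_on_set S f \<longleftrightarrow>
     (\<exists>U F. open U \<and> S \<subseteq> U \<and> smooth_map_on U F \<and> (\<forall>x\<in>S. F x = f x))"

definition diffeomorphic_sets :: "(real^'n) set \<Rightarrow> (real^'m) set \<Rightarrow> bool" where
  "diffeomorphic_sets A B \<longleftrightarrow>
     (\<exists>f g. smooth_on_set A f \<and> smooth_on_set B g \<and>
        (\<forall>x\<in>A. f x \<in> B \<and> g (f x) = x) \<and> (\<forall>y\<in>B. g y \<in> A \<and> f (g y) = y))"

text \<open>\<Delta> is given as a family D indexed by a finite type 'n (an enumeration of the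
  multiset \<Delta>, with multiplicities).\<close>

definition balanced :: "('n::finite \<Rightarrow> int \<times> int) \<Rightarrow> bool" where
  "balanced D \<longleftrightarrow> (\<Sum>i\<in>UNIV. fst (D i)) = 0 \<and> (\<Sum>i\<in>UNIV. snd (D i)) = 0"

definition nondegenerate :: "('n \<Rightarrow> int \<times> int) \<Rightarrow> bool" where
  "nondegenerate D \<longleftrightarrow> (\<exists>i j. fst (D i) * snd (D j) - snd (D i) * fst (D j) \<noteq> 0)"

definition even_family :: "('n \<Rightarrow> int \<times> int) \<Rightarrow> bool" where
  "even_family D \<longleftrightarrow> (\<forall>i. even (fst (D i)) \<and> even (snd (D i)))"

text \<open>D i and D j are outer normals of the same side of P_\<Delta> iff they are positively parallel.\<close>
definition same_side :: "('n \<Rightarrow> int \<times> int) \<Rightarrow> 'n \<Rightarrow> 'n \<Rightarrow> bool" where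
  "same_side D i j \<longleftrightarrow>
     fst (D i) * snd (D j) - snd (D i) * fst (D j) = 0 \<and>
     fst (D i) * fst (D j) + snd (D i) * snd (D j) > 0"

text \<open>Edge vector (before the rotation by pi/2) of the side \<sigma> having D i as an outer normal.\<close>
definition side_vec :: "('n::finite \<Rightarrow> int \<times> int) \<Rightarrow> 'n \<Rightarrow> int \<times> int" where
  "side_vec D i = ((\<Sum>j | same_side D i j. fst (D j)), (\<Sum>j | same_side D i j. snd (D j)))"

text \<open>Euclidean length of that side (rotation preserves length).\<close>
definition side_len :: "('n::finite \<Rightarrow> int \<times> int) \<Rightarrow> 'n \<Rightarrow> real" where
  "side_len D i = sqrt (real_of_int (fst (side_vec D i))^2 + real_of_int (snd (side_vec D i))^2)"

definition side_lat_len :: "('n::finite \<Rightarrow> int \<times> int) \<Rightarrow> 'n \<Rightarrow> nat" where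
  "side_lat_len D i = nat (gcd (fst (side_vec D i)) (snd (side_vec D i)))"

definition kval :: "('n \<Rightarrow> int \<times> int) \<Rightarrow> 'n \<Rightarrow> nat" where
  "kval D i = nat (gcd (fst (D i)) (snd (D i))) div 2"

definition k0 :: "('n \<Rightarrow> int \<times> int) \<Rightarrow> nat" where
  "k0 D = Gcd (range (kval D))"

text \<open>lambda(x,y) = c1 x + c2 y; injective on Z^2.\<close>
definition lambda_injective :: "real \<Rightarrow> real \<Rightarrow> bool" where
  "lambda_injective c1 c2 \<longleftrightarrow>
     (\<forall>m n :: int. c1 * real_of_int m + c2 * real_of_int n = 0 \<longrightarrow> m = 0 \<and> n = 0)"

text \<open>The side with outer normal D i lies in B' iff lambda increases along the
  counterclockwise boundary direction, which is D i rotated by pi/2, i.e. (-b, a).\<close>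
definition in_B1 :: "('n \<Rightarrow> int \<times> int) \<Rightarrow> real \<Rightarrow> real \<Rightarrow> 'n \<Rightarrow> bool" where
  "in_B1 D c1 c2 i \<longleftrightarrow> c1 * real_of_int (- snd (D i)) + c2 * real_of_int (fst (D i)) > 0"

text \<open>Moment map of the toric curve of the lattice segment [0,l], normalised to [0,1]:
  the point with coordinate xi > 0 goes to the fraction mu of the segment,
  measured from the lambda-minimal endpoint.\<close>
definition moment_frac :: "nat \<Rightarrow> real \<Rightarrow> real" where
  "moment_frac l \<xi> = (\<Sum>j\<le>l. real j * \<xi> ^ j) / (real l * (\<Sum>j\<le>l. \<xi> ^ j))"

text \<open>A point of Tor^+_R(\<sigma>) is described by its distance t from the lambda-minimal
  endpoint (0 \<le> t \<le> length); its coordinate xi on the positive half-axis:\<close>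
definition xi_coord :: "nat \<Rightarrow> real \<Rightarrow> real \<Rightarrow> real" where
  "xi_coord l L t = (THE \<xi>. \<xi> > 0 \<and> L * moment_frac l \<xi> = t)"

definition Men_rho :: "('n::finite \<Rightarrow> int \<times> int) \<Rightarrow> real \<Rightarrow> real \<Rightarrow> real \<Rightarrow> (real^'n) set" where
  "Men_rho D c1 c2 \<rho> =
     {t. (\<forall>i. \<rho> \<le> t $ i \<and> \<rho> \<le> side_len D i - t $ i) \<and>
         (\<Prod>i | in_B1 D c1 c2 i. xi_coord (side_lat_len D i) (side_len D i) (t $ i) ^ (kval D i div k0 D))
       = (\<Prod>i | \<not> in_B1 D c1 c2 i. xi_coord (side_lat_len D i) (side_len D i) (t $ i) ^ (kval D i div k0 D))}"

end

theory Submission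
  imports Defs
begin


fun Cn :: "nat \<Rightarrow> real set \<Rightarrow> (real \<Rightarrow> real) \<Rightarrow> bool" where
  "Cn 0 I f = True"
| "Cn (Suc n) I f = ((\<forall>x\<in>I. f differentiable (at x)) \<and> Cn n I (deriv f))"

definition smooth1 :: "real set \<Rightarrow> (real \<Rightarrow> real) \<Rightarrow> bool" where
  "smooth1 I f \<longleftrightarrow> open I \<and> (\<forall>n. Cn n I f)"

lemma rdiff_fdiff: "(f::real\<Rightarrow>real) differentiable (at x) \<Longrightarrow> f field_differentiable (at x)"
  using DERIV_deriv_iff_real_differentiable field_differentiable_def by blast

lemma Cn_cong:
  assumes "open I" "Cn n I f" "\<And>x. x \<in> I \<Longrightarrow> f x = g x"
  shows "Cn n I g"
  using assms(2,3)
proof (induction n arbitrary: f g)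
  case 0 then show ?case by simp
next
  case (Suc n)
  have ev: "\<And>x. x \<in> I \<Longrightarrow> eventually (\<lambda>y. f y = g y) (nhds x)"
    using Suc.prems(2) assms(1) eventually_nhds by blast
  have d: "\<forall>x\<in>I. g differentiable (at x)"
  proof
    fix x assume x: "x \<in> I"
    have "f differentiable (at x)" using Suc.prems(1) x by simp
    then obtain D where "(f has_derivative D) (at x)" by (auto simp: differentiable_def)
    then have "(g has_derivative D) (at x)"
      using has_derivative_transform_within_open[OF _ assms(1) x] Suc.prems(2) by blast
    then show "g differentiable (at x)" by (auto simp: differentiable_def)
  qed
  have "Cn n I (deriv g)"
    using Suc.IH[of "deriv f" "deriv g"] Suc.prems deriv_cong_ev[OF ev] by auto
  then show ?case using d by simp
qed

lemma Cn_Suc_mono: "Cn (Suc n) I f \<Longrightarrow> Cn n I f"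
  by (induction n arbitrary: f) auto

lemma Cn_le_mono: "Cn n I f \<Longrightarrow> m \<le> n \<Longrightarrow> Cn m I f"
  by (induction n arbitrary: m) (use Cn_Suc_mono le_Suc_eq in blast)+

lemma Cn_const: "open I \<Longrightarrow> Cn n I (\<lambda>x. c)"
proof (induction n arbitrary: c)
  case (Suc n)
  have "Cn n I (deriv (\<lambda>x. c))" using Suc by simp
  then show ?case by simp
qed simp

lemma Cn_id: assumes "open I" shows "Cn n I (\<lambda>x. x)"
proof (cases n)
  case (Suc m)
  have "deriv (\<lambda>x. x) = (\<lambda>x::real. 1)" by (simp add: ext)
  then show ?thesis using Suc Cn_const[of I m 1] assms by simp
qed simp

lemma Cn_add:
  assumes "open I" shows "Cn n I f \<Longrightarrow> Cn n I g \<Longrightarrow> Cn n I (\<lambda>x. f x + g x)"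
proof (induction n arbitrary: f g)
  case (Suc n)
  have "Cn n I (\<lambda>x. deriv f x + deriv g x)" using Suc by simp
  moreover have "\<And>x. x \<in> I \<Longrightarrow> deriv f x + deriv g x = deriv (\<lambda>x. f x + g x) x"
    using Suc.prems by (subst deriv_add) (auto intro: rdiff_fdiff)
  ultimately have "Cn n I (deriv (\<lambda>x. f x + g x))" by (rule Cn_cong[OF assms])
  then show ?case using Suc.prems by auto
qed simp

lemma Cn_mult:
  assumes "open I" shows "Cn n I f \<Longrightarrow> Cn n I g \<Longrightarrow> Cn n I (\<lambda>x. f x * g x)"
proof (induction n arbitrary: f g)
  case (Suc n)
  have "Cn n I (\<lambda>x. deriv f x * g x)" using Suc Cn_Suc_mono by simp
  moreover have "Cn n I (\<lambda>x. f x * deriv g x)" using Suc Cn_Suc_mono by simp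
  ultimately have "Cn n I (\<lambda>x. deriv f x * g x + f x * deriv g x)" using Cn_add[OF assms] by blast
  moreover have "\<And>x. x \<in> I \<Longrightarrow> deriv f x * g x + f x * deriv g x = deriv (\<lambda>x. f x * g x) x"
    using Suc.prems by (subst deriv_mult) (auto intro: rdiff_fdiff simp: algebra_simps)
  ultimately have "Cn n I (deriv (\<lambda>x. f x * g x))" by (rule Cn_cong[OF assms])
  then show ?case using Suc.prems by auto
qed simp

lemma Cn_compose:
  assumes "open I" "open J"
  shows "\<forall>x\<in>I. g x \<in> J \<Longrightarrow> Cn n J f \<Longrightarrow> Cn n I g \<Longrightarrow> Cn n I (\<lambda>x. f (g x))"
proof (induction n arbitrary: f g)
  case (Suc n)
  have gJ: "\<And>x. x \<in> I \<Longrightarrow> g x \<in> J" using Suc.prems(1) by blast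
  have "Cn n I (\<lambda>x. deriv f (g x))" using Suc Cn_Suc_mono by simp
  moreover have "Cn n I (deriv g)" using Suc by simp
  ultimately have "Cn n I (\<lambda>x. deriv f (g x) * deriv g x)" using Cn_mult[OF assms(1)] by blast
  moreover have "\<And>x. x \<in> I \<Longrightarrow> deriv f (g x) * deriv g x = deriv (\<lambda>x. f (g x)) x"
  proof -
    fix x assume x: "x \<in> I"
    have "(f has_real_derivative deriv f (g x)) (at (g x))"
      using Suc.prems(2) gJ[OF x] DERIV_deriv_iff_real_differentiable by auto
    moreover have "(g has_real_derivative deriv g x) (at x)"
      using Suc.prems(3) x by (simp add: DERIV_deriv_iff_real_differentiable)
    ultimately have "((\<lambda>x. f (g x)) has_real_derivative deriv f (g x) * deriv g x) (at x)"
      using DERIV_chain2 by blast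
    then show "deriv f (g x) * deriv g x = deriv (\<lambda>x. f (g x)) x" by (simp add: DERIV_imp_deriv)
  qed
  ultimately have "Cn n I (deriv (\<lambda>x. f (g x)))" by (rule Cn_cong[OF assms(1)])
  moreover have "\<forall>x\<in>I. (\<lambda>x. f (g x)) differentiable (at x)"
  proof
    fix x assume x: "x \<in> I"
    have "f differentiable (at (g x))" using Suc.prems(2) gJ[OF x] unfolding Cn.simps by blast
    moreover have "g differentiable (at x)" using Suc.prems(3) x by simp
    ultimately show "(\<lambda>x. f (g x)) differentiable (at x)"
      using differentiable_chain_at[of g x f] by (simp add: o_def)
  qed
  ultimately show ?case by simp
qed simp



lemma Cn_inverse: "Cn n (-{0}) inverse"
proof (induction n)
  case (Suc n)
  have o: "open (-{0::real})" by auto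
  have "Cn n (-{0}) (\<lambda>x. (-1) * (inverse x * inverse x))"
    using Cn_mult[OF o] Cn_const[OF o] Suc by blast
  moreover have "\<And>x. x \<in> -{0} \<Longrightarrow> (-1) * (inverse x * inverse x) = deriv inverse (x::real)"
    by (rule DERIV_imp_deriv[symmetric]) (auto intro!: derivative_eq_intros simp: power2_eq_square)
  ultimately have "Cn n (-{0}) (deriv inverse)" by (rule Cn_cong[OF o])
  moreover have "\<forall>x\<in>-{0}. (inverse :: real \<Rightarrow> real) differentiable (at x)"
    by (auto intro!: derivative_intros)
  ultimately show ?case by simp
qed simp

lemma Cn_exp: "open I \<Longrightarrow> Cn n I exp"
proof (induction n)
  case (Suc n)
  have "deriv exp = (exp :: real \<Rightarrow> real)" by (rule ext) (simp add: DERIV_imp_deriv)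
  moreover have "\<forall>x\<in>I. (exp :: real \<Rightarrow> real) differentiable (at x)"
    using DERIV_exp real_differentiable_def by blast
  ultimately show ?case using Suc by simp
qed simp

lemma Cn_sum:
  assumes "open I" "finite A"
  shows "(\<And>j. j \<in> A \<Longrightarrow> Cn n I (f j)) \<Longrightarrow> Cn n I (\<lambda>x. \<Sum>j\<in>A. f j x)"
  using assms(2)
proof (induction A rule: finite_induct)
  case empty then show ?case using Cn_const[OF assms(1)] by simp
next
  case (insert a A)
  then show ?case using Cn_add[OF assms(1), of n "f a" "\<lambda>x. \<Sum>j\<in>A. f j x"] by simp
qed

lemma Cn_power:
  assumes "open I" "Cn n I f" shows "Cn n I (\<lambda>x. f x ^ k)"
proof (induction k)
  case 0 then show ?case using Cn_const[OF assms(1)] by simp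
next
  case (Suc k) then show ?case using Cn_mult[OF assms(1) assms(2) Suc] by simp
qed

lemma Cn_inv_fun:
  assumes I: "open I" and J: "open J" and g: "\<And>n. Cn n I g"
    and hI: "\<And>t. t \<in> J \<Longrightarrow> h t \<in> I"
    and hd: "\<And>t. t \<in> J \<Longrightarrow> (h has_real_derivative inverse (deriv g (h t))) (at t)"
    and nz: "\<And>t. t \<in> J \<Longrightarrow> deriv g (h t) \<noteq> 0"
  shows "Cn n J h"
proof (induction n)
  case (Suc n)
  have "Cn n I (deriv g)" using g[of "Suc n"] by simp
  then have "Cn n J (\<lambda>t. deriv g (h t))" using Cn_compose[OF J I] Suc hI by blast
  then have "Cn n J (\<lambda>t. inverse (deriv g (h t)))"
    using Cn_compose[OF J _, of "-{0}" "\<lambda>t. deriv g (h t)" n inverse] Cn_inverse nz by auto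
  moreover have "\<And>t. t \<in> J \<Longrightarrow> inverse (deriv g (h t)) = deriv h t"
    using hd DERIV_imp_deriv by metis
  ultimately have "Cn n J (deriv h)" by (rule Cn_cong[OF J])
  moreover have "\<forall>t\<in>J. h differentiable (at t)" using hd real_differentiable_def by blast
  ultimately show ?case by simp
qed simp



definition NN :: "nat \<Rightarrow> real \<Rightarrow> real" where "NN l u = (\<Sum>j\<le>l. real j * exp u ^ j)"
definition N2 :: "nat \<Rightarrow> real \<Rightarrow> real" where "N2 l u = (\<Sum>j\<le>l. real j * real j * exp u ^ j)"
definition DD :: "nat \<Rightarrow> real \<Rightarrow> real" where "DD l u = (\<Sum>j\<le>l. exp u ^ j)"

definition psi :: "nat \<Rightarrow> real \<Rightarrow> real \<Rightarrow> real" where "psi l L u = L * moment_frac l (exp u)"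

lemma DD_pos: "DD l u > 0"
  unfolding DD_def by (rule sum_pos2[of _ 0]) auto

lemma psi_eq: "psi l L u = L * (NN l u / (real l * DD l u))"
  by (simp add: psi_def moment_frac_def NN_def DD_def)

lemma d_pow_exp: "((\<lambda>u::real. exp u ^ j) has_real_derivative real j * exp u ^ j) (at u)"
proof -
  have e: "(\<lambda>u::real. exp u ^ j) = (\<lambda>u. exp (real j * u))" by (simp add: exp_of_nat_mult)
  have H: "((\<lambda>u. exp (real j * u)) has_real_derivative exp (real j * u) * (real j * 1)) (at u)"
    by (rule DERIV_chain2[OF DERIV_exp DERIV_cmult[OF DERIV_ident]])
  have V: "exp (real j * u) * (real j * 1) = real j * exp u ^ j" by (simp add: exp_of_nat_mult)
  show ?thesis using H unfolding V e .
qed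

lemma d_NN: "(NN l has_real_derivative N2 l u) (at u)"
  unfolding NN_def N2_def
  by (rule DERIV_sum) (use DERIV_cmult[OF d_pow_exp] in \<open>simp add: mult.assoc\<close>)

lemma d_DD: "(DD l has_real_derivative NN l u) (at u)"
  unfolding NN_def DD_def
  by (rule DERIV_sum) (rule d_pow_exp)

lemma var_identity:
  fixes w :: "nat \<Rightarrow> real" and S :: "nat set"
  shows "(\<Sum>j\<in>S. \<Sum>k\<in>S. (real j - real k)^2 * w j * w k)
     = 2 * ((\<Sum>j\<in>S. real j * real j * w j) * (\<Sum>j\<in>S. w j) - (\<Sum>j\<in>S. real j * w j) * (\<Sum>j\<in>S. real j * w j))"
proof -
  have pt: "\<And>j k. (real j - real k)^2 * w j * w k
     = (real j * real j * w j) * w k + w j * (real k * real k * w k) - 2 * ((real j * w j) * (real k * w k))"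
    by (simp add: power2_eq_square algebra_simps)
  have "(\<Sum>j\<in>S. \<Sum>k\<in>S. (real j - real k)^2 * w j * w k)
      = (\<Sum>j\<in>S. \<Sum>k\<in>S. (real j * real j * w j) * w k) + (\<Sum>j\<in>S. \<Sum>k\<in>S. w j * (real k * real k * w k))
        - 2 * (\<Sum>j\<in>S. \<Sum>k\<in>S. (real j * w j) * (real k * w k))"
    by (simp only: pt sum.distrib sum_subtractf sum_distrib_left[symmetric])
  also have "... = 2 * ((\<Sum>j\<in>S. real j * real j * w j) * (\<Sum>j\<in>S. w j) - (\<Sum>j\<in>S. real j * w j) * (\<Sum>j\<in>S. real j * w j))"
    by (simp only: sum_product[symmetric]) (simp add: algebra_simps)
  finally show ?thesis .
qed

lemma var_pos:
  assumes "l \<ge> 1"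
  shows "N2 l u * DD l u - NN l u * NN l u > 0"
proof -
  let ?w = "\<lambda>j. exp u ^ j"
  have "0 < (\<Sum>j\<in>{..l}. \<Sum>k\<in>{..l}. (real j - real k)^2 * ?w j * ?w k)"
  proof (rule sum_pos2[of _ 0])
    show "0 < (\<Sum>k\<in>{..l}. (real 0 - real k)^2 * ?w 0 * ?w k)"
      by (rule sum_pos2[of _ 1]) (use assms in auto)
  qed (auto intro!: sum_nonneg)
  then show ?thesis using var_identity[of ?w "{..l}"] by (simp add: N2_def DD_def NN_def)
qed

definition dpsi :: "nat \<Rightarrow> real \<Rightarrow> real \<Rightarrow> real" where
  "dpsi l L u = L * ((N2 l u * (real l * DD l u) - NN l u * (real l * NN l u)) / (real l * DD l u * (real l * DD l u)))"

lemma d_psi: assumes "l \<ge> 1" shows "(psi l L has_real_derivative dpsi l L u) (at u)"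
proof -
  have "psi l L = (\<lambda>u. L * (NN l u / (real l * DD l u)))" by (rule ext) (simp add: psi_eq)
  moreover have "((\<lambda>u. NN l u / (real l * DD l u)) has_real_derivative
      (N2 l u * (real l * DD l u) - NN l u * (real l * NN l u)) / (real l * DD l u * (real l * DD l u))) (at u)"
    by (rule DERIV_divide[OF d_NN DERIV_cmult[OF d_DD]]) (use assms DD_pos[of l u] in auto)
  ultimately show ?thesis unfolding dpsi_def using DERIV_cmult by metis
qed

lemma dpsi_pos: assumes "l \<ge> 1" "L > 0" shows "dpsi l L u > 0"
proof -
  have "N2 l u * (real l * DD l u) - NN l u * (real l * NN l u) = real l * (N2 l u * DD l u - NN l u * NN l u)"
    by (simp add: algebra_simps)
  moreover have "... > 0" using var_pos[OF assms(1)] assms by simp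
  ultimately have X: "N2 l u * (real l * DD l u) - NN l u * (real l * NN l u) > 0" by simp
  have Y: "real l * DD l u * (real l * DD l u) > 0" using assms DD_pos[of l u] by simp
  show ?thesis unfolding dpsi_def by (rule mult_pos_pos[OF assms(2) divide_pos_pos[OF X Y]])
qed



lemma S_ge1: "(0::real) \<le> \<xi> \<Longrightarrow> 1 \<le> (\<Sum>j\<le>l. \<xi> ^ j)"
  using member_le_sum[of 0 "{..l}" "\<lambda>j. \<xi> ^ j"] by auto

lemma mf_b1:
  assumes "l \<ge> 1" "0 < \<xi>" "\<xi> \<le> 1"
  shows "moment_frac l \<xi> \<le> (real l + 1) * \<xi>"
proof -
  let ?S = "\<Sum>j\<le>l. \<xi> ^ j" and ?T = "\<Sum>j\<le>l. real j * \<xi> ^ j"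
  have "?T \<le> (\<Sum>j\<le>l. real l * \<xi>)"
  proof (rule sum_mono)
    fix j assume j: "j \<in> {..l}"
    show "real j * \<xi> ^ j \<le> real l * \<xi>"
    proof (cases j)
      case 0 then show ?thesis using assms by simp
    next
      case (Suc i)
      have "\<xi> ^ j = \<xi> * \<xi> ^ i" using Suc by simp
      also have "... \<le> \<xi>" using assms by (simp add: mult_left_le power_le_one)
      finally show ?thesis using j assms by (intro mult_mono) auto
    qed
  qed
  then have T: "?T \<le> (real l + 1) * real l * \<xi>" by (simp add: algebra_simps)
  have S: "1 \<le> ?S" using S_ge1 assms by simp
  have T0: "0 \<le> ?T" using assms by (auto intro!: sum_nonneg)
  have "moment_frac l \<xi> = ?T / (real l * ?S)" by (simp add: moment_frac_def)
  also have "... \<le> ?T / real l"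
    using S T0 assms by (intro divide_left_mono) (auto intro!: mult_pos_pos)
  also have "... \<le> (real l + 1) * \<xi>" using T assms by (simp add: divide_le_eq algebra_simps)
  finally show ?thesis .
qed

lemma lS_minus_T: "real l * (\<Sum>j\<le>l. \<xi> ^ j) - (\<Sum>j\<le>l. real j * \<xi> ^ j) = (\<Sum>j\<le>l. (real l - real j) * \<xi> ^ j)"
  by (simp add: sum_distrib_left sum_subtractf left_diff_distrib)

lemma mf_b2:
  assumes "l \<ge> 1" "1 \<le> \<xi>"
  shows "1 - moment_frac l \<xi> \<le> (real l + 1) / \<xi>"
proof -
  let ?S = "\<Sum>j\<le>l. \<xi> ^ j" and ?T = "\<Sum>j\<le>l. real j * \<xi> ^ j"
  have "(\<Sum>j\<le>l. (real l - real j) * \<xi> ^ j) \<le> (\<Sum>j\<le>l. real l * \<xi> ^ (l - 1))"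
  proof (rule sum_mono)
    fix j assume j: "j \<in> {..l}"
    show "(real l - real j) * \<xi> ^ j \<le> real l * \<xi> ^ (l - 1)"
    proof (cases "j = l")
      case True then show ?thesis using assms by simp
    next
      case False
      then have "j \<le> l - 1" using j by auto
      then have "\<xi> ^ j \<le> \<xi> ^ (l - 1)" using assms by (simp add: power_increasing)
      then show ?thesis using j assms by (intro mult_mono) auto
    qed
  qed
  then have N: "real l * ?S - ?T \<le> (real l + 1) * real l * \<xi> ^ (l - 1)" by (simp add: lS_minus_T algebra_simps)
  have Sl: "\<xi> ^ l \<le> ?S" using member_le_sum[of l "{..l}" "\<lambda>j. \<xi> ^ j"] assms by auto
  have Spos: "0 < ?S" using S_ge1[of \<xi> l] assms by simp
  have lpos: "0 < real l" using assms by simp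
  have "1 - moment_frac l \<xi> = (real l * ?S - ?T) / (real l * ?S)"
    using Spos lpos by (simp add: moment_frac_def field_simps)
  also have "... \<le> ((real l + 1) * real l * \<xi> ^ (l - 1)) / (real l * \<xi> ^ l)"
  proof (rule frac_le)
    show "0 \<le> (real l + 1) * real l * \<xi> ^ (l - 1)" using assms by simp
    show "0 < real l * \<xi> ^ l" using assms by simp
    show "real l * \<xi> ^ l \<le> real l * ?S" using Sl lpos by simp
  qed (rule N)
  also have "... = (real l + 1) / \<xi>"
  proof -
    have "\<xi> ^ l = \<xi> * \<xi> ^ (l - 1)" using assms by (metis Suc_diff_le diff_Suc_1 power_Suc)
    then show ?thesis using assms lpos by (simp add: field_simps)
  qed
  finally show ?thesis .
qed

lemma mf_b3:
  assumes "l \<ge> 1" "0 < \<xi>"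
  shows "0 < moment_frac l \<xi> \<and> moment_frac l \<xi> < 1"
proof -
  let ?S = "\<Sum>j\<le>l. \<xi> ^ j" and ?T = "\<Sum>j\<le>l. real j * \<xi> ^ j"
  have T: "0 < ?T" by (rule sum_pos2[of _ 1]) (use assms in auto)
  have "0 < (\<Sum>j\<le>l. (real l - real j) * \<xi> ^ j)" by (rule sum_pos2[of _ 0]) (use assms in auto)
  then have TS: "?T < real l * ?S" using lS_minus_T[of l \<xi>] by simp
  have Spos: "0 < ?S" using S_ge1[of \<xi> l] assms by simp
  show ?thesis using T TS Spos assms by (simp add: moment_frac_def divide_less_eq)
qed



definition phi :: "nat \<Rightarrow> real \<Rightarrow> real \<Rightarrow> real" where
  "phi l L t = (THE u. psi l L u = t)"

context
  fixes l :: nat and L :: real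
  assumes l1: "l \<ge> 1" and Lpos: "L > 0"
begin

lemma psi_range: "0 < psi l L u \<and> psi l L u < L"
  using mf_b3[OF l1, of "exp u"] Lpos by (simp add: psi_def)

lemma psi_strict: "u < v \<Longrightarrow> psi l L u < psi l L v"
  using DERIV_pos_imp_increasing[of u v "psi l L"] d_psi[OF l1] dpsi_pos[OF l1 Lpos] by blast

lemma psi_le_iff: "psi l L u \<le> psi l L v \<longleftrightarrow> u \<le> v"
  using psi_strict[of u v] psi_strict[of v u] by (cases u v rule: linorder_cases) auto

lemma psi_eq_iff: "psi l L u = psi l L v \<longleftrightarrow> u = v"
  using psi_le_iff by (metis order_antisym order_refl)

lemma psi_cont: "isCont (psi l L) u"
  using d_psi[OF l1] DERIV_isCont by blast

lemma psi_surj: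
  assumes t: "0 < t" "t < L"
  shows "\<exists>u. psi l L u = t"
proof -
  define x1 where "x1 = min 1 (t / (2 * L * (real l + 1)))"
  define x2 where "x2 = max 1 (2 * L * (real l + 1) / (L - t))"
  have x1: "0 < x1" "x1 \<le> 1" "x1 \<le> t / (2 * L * (real l + 1))" using t Lpos by (auto simp: x1_def)
  have x2: "1 \<le> x2" "2 * L * (real l + 1) / (L - t) \<le> x2" by (auto simp: x2_def)
  have "psi l L (ln x1) = L * moment_frac l x1" using x1 by (simp add: psi_def)
  also have "... \<le> L * ((real l + 1) * x1)" using mf_b1[OF l1 x1(1,2)] Lpos by simp
  also have "... \<le> L * ((real l + 1) * (t / (2 * L * (real l + 1))))"
    using x1(3) Lpos by (intro mult_left_mono) auto
  also have "... = t / 2"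
  proof -
    have lp: "L * (real l + 1) \<noteq> 0" using Lpos by simp
    have "L * ((real l + 1) * (t / (2 * L * (real l + 1)))) = (L * (real l + 1)) * t / ((L * (real l + 1)) * 2)"
      by (simp add: algebra_simps)
    also have "... = t / 2" using lp by simp
    finally show ?thesis .
  qed
  finally have p1: "psi l L (ln x1) \<le> t" using t by simp
  have "L - psi l L (ln x2) = L * (1 - moment_frac l x2)" using x2 by (simp add: psi_def algebra_simps)
  also have "... \<le> L * ((real l + 1) / x2)" using mf_b2[OF l1 x2(1)] Lpos by (intro mult_left_mono) auto
  also have "... \<le> L * ((real l + 1) / (2 * L * (real l + 1) / (L - t)))"
    using x2 Lpos t by (intro mult_left_mono divide_left_mono) (auto intro!: mult_pos_pos divide_pos_pos)
  also have "... = (L - t) / 2"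
  proof -
    have lp: "L * (real l + 1) \<noteq> 0" using Lpos by simp
    have "L * ((real l + 1) / (2 * L * (real l + 1) / (L - t))) = (L * (real l + 1)) * (L - t) / ((L * (real l + 1)) * 2)"
      by (simp add: divide_divide_eq_right algebra_simps)
    also have "... = (L - t) / 2" using lp by simp
    finally show ?thesis .
  qed
  finally have p2: "t \<le> psi l L (ln x2)" using t by simp
  have le: "ln x1 \<le> ln x2" using x1 x2 by simp
  have "continuous_on {ln x1..ln x2} (psi l L)"
    using psi_cont by (simp add: continuous_at_imp_continuous_on)
  then show ?thesis using IVT'[of "psi l L" "ln x1" t "ln x2", OF p1 p2 le] by blast
qed

lemma phi_psi: "phi l L (psi l L u) = u"
  unfolding phi_def using psi_eq_iff by (intro the_equality) auto

lemma psi_phi: "0 < t \<Longrightarrow> t < L \<Longrightarrow> psi l L (phi l L t) = t"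
  using psi_surj phi_psi by metis

lemma phi_deriv:
  assumes t: "0 < t" "t < L"
  shows "(phi l L has_real_derivative inverse (dpsi l L (phi l L t))) (at t)"
proof (rule DERIV_inverse_function[where f = "psi l L" and a = 0 and b = L])
  show "(psi l L has_real_derivative dpsi l L (phi l L t)) (at (phi l L t))" by (rule d_psi[OF l1])
  show "dpsi l L (phi l L t) \<noteq> 0" using dpsi_pos[OF l1 Lpos] by (metis less_irrefl)
  show "\<And>y. 0 < y \<Longrightarrow> y < L \<Longrightarrow> psi l L (phi l L y) = y" by (rule psi_phi)
  have "isCont (phi l L) (psi l L (phi l L t))"
    by (rule isCont_inverse_function[of 1]) (auto simp: phi_psi psi_cont)
  then show "isCont (phi l L) t" using psi_phi[OF t] by simp
qed (use t in auto)

lemma psi_smooth: "Cn n UNIV (psi l L)"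
proof -
  have o: "open (UNIV :: real set)" by simp
  have ex: "Cn n UNIV (\<lambda>u. exp u ^ j)" for j using Cn_power[OF o Cn_exp[OF o]] .
  have N: "Cn n UNIV (NN l)" unfolding NN_def
    by (rule Cn_sum[OF o]) (auto intro!: Cn_mult[OF o] Cn_const ex)
  have D: "Cn n UNIV (\<lambda>u. real l * DD l u)" unfolding DD_def
    by (intro Cn_mult[OF o] Cn_const Cn_sum[OF o] ex) auto
  have im: "\<forall>x\<in>UNIV. real l * DD l x \<in> -{0}"
  proof
    fix x :: real
    have "0 < real l * DD l x" using l1 DD_pos[of l x] by simp
    then have "real l * DD l x \<noteq> 0" by (metis less_irrefl)
    then show "real l * DD l x \<in> -{0}" by simp
  qed
  have oJ: "open (-{0::real})" by auto
  have Di: "Cn n UNIV (\<lambda>u. inverse (real l * DD l u))"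
    by (rule Cn_compose[OF o oJ im Cn_inverse D])
  have "Cn n UNIV (\<lambda>u. L * (NN l u * inverse (real l * DD l u)))"
    by (intro Cn_mult[OF o] Cn_const N Di) simp
  then show ?thesis by (rule Cn_cong[OF o]) (simp add: psi_eq divide_inverse)
qed

lemma phi_smooth: "Cn n {0<..<L} (phi l L)"
proof (rule Cn_inv_fun[where I = UNIV and g = "psi l L"])
  fix t :: real assume "t \<in> {0<..<L}"
  then have t: "0 < t" "t < L" by auto
  have "deriv (psi l L) (phi l L t) = dpsi l L (phi l L t)"
    using d_psi[OF l1] DERIV_imp_deriv by blast
  then show "(phi l L has_real_derivative inverse (deriv (psi l L) (phi l L t))) (at t)"
    "deriv (psi l L) (phi l L t) \<noteq> 0"
    using phi_deriv[OF t] dpsi_pos[OF l1 Lpos, of "phi l L t"] by auto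
qed (auto intro: psi_smooth)

lemma xi_coord_eq:
  assumes t: "0 < t" "t < L"
  shows "xi_coord l L t = exp (phi l L t)"
  unfolding xi_coord_def
proof (rule the_equality)
  show "0 < exp (phi l L t) \<and> L * moment_frac l (exp (phi l L t)) = t"
    using psi_phi[OF t] by (simp add: psi_def)
  fix \<xi> assume h: "0 < \<xi> \<and> L * moment_frac l \<xi> = t"
  then have "psi l L (ln \<xi>) = t" by (simp add: psi_def)
  then have "ln \<xi> = phi l L t" using phi_psi by metis
  then show "\<xi> = exp (phi l L t)" using h by (metis exp_ln)
qed

end


lemma coord_has_derivative:
  fixes f :: "real \<Rightarrow> real" and x :: "real^'n"
  assumes "f differentiable (at (x $ i))"
  shows "((\<lambda>x. f (x $ i)) has_derivative (\<lambda>h. deriv f (x $ i) * h $ i)) (at x)"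
proof -
  have d1: "((\<lambda>x::real^'n. x $ i) has_derivative (\<lambda>h. h $ i)) (at x)"
    by (rule bounded_linear_imp_has_derivative) (rule bounded_linear_vec_nth)
  have "(f has_real_derivative deriv f (x $ i)) (at (x $ i))"
    using assms DERIV_deriv_iff_real_differentiable by blast
  then have d2: "(f has_derivative (\<lambda>y. deriv f (x $ i) * y)) (at (x $ i))"
    by (simp add: has_field_derivative_def)
  show ?thesis using diff_chain_at[OF d1 d2] by (simp add: o_def)
qed

lemma smooth_coord:
  fixes U :: "(real^'n) set" and f :: "real \<Rightarrow> real"
  assumes U: "open U" and I: "open I" and f: "\<And>n. Cn n I f" and UI: "\<And>x. x \<in> U \<Longrightarrow> x $ i \<in> I"
  shows "smooth_scalar_on U (\<lambda>x. f (x $ i))"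
proof -
  define X where "X = (\<lambda>g. \<exists>f. (\<forall>n. Cn n I f) \<and> (\<forall>x\<in>U. g x = f (x $ i)))"
  have "X (\<lambda>x. f (x $ i))" unfolding X_def using f by blast
  then show ?thesis
  proof (rule smooth_scalar_on.coinduct[where X = X])
    fix g assume "X g"
    then obtain f where f: "\<And>n. Cn n I f" and g: "\<And>x. x \<in> U \<Longrightarrow> g x = f (x $ i)"
      unfolding X_def by blast
    have fd: "\<And>y. y \<in> I \<Longrightarrow> f differentiable (at y)" using f[of 1] by simp
    have gd: "(g has_derivative (\<lambda>h. deriv f (x $ i) * h $ i)) (at x)" if x: "x \<in> U" for x
      using has_derivative_transform_within_open[OF coord_has_derivative[OF fd[OF UI[OF x]]] U x] g
      by simp
    have c1: "\<forall>x\<in>U. g differentiable (at x)" using gd differentiable_def by blast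
    have c2: "continuous_on U g"
      using c1 differentiable_imp_continuous_within continuous_at_imp_continuous_on by blast
    have c3: "X (partial_deriv g k)" for k
    proof -
      define f' where "f' = (if k = i then deriv f else (\<lambda>_. 0))"
      have "Cn n I f'" for n
        using f[of "Suc n"] Cn_const[OF I] by (auto simp: f'_def)
      moreover have "partial_deriv g k x = f' (x $ i)" if x: "x \<in> U" for x
      proof -
        have "frechet_derivative g (at x) = (\<lambda>h. deriv f (x $ i) * h $ i)"
          using frechet_derivative_at[OF gd[OF x]] by simp
        then show ?thesis by (simp add: partial_deriv_def f'_def axis_def)
      qed
      ultimately show ?thesis unfolding X_def by blast
    qed
    show "\<exists>g'. g = g' \<and> (\<forall>x\<in>U. g' differentiable at x) \<and> continuous_on U g' \<and>
         (\<forall>i. X (partial_deriv g' i) \<or> smooth_scalar_on U (partial_deriv g' i))"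
      using c1 c2 c3 by blast
  qed
qed



lemma prod_exp_pow: "finite A \<Longrightarrow> (\<Prod>i\<in>A. exp (h i) ^ k i) = exp (\<Sum>i\<in>A. real (k i) * h i)"
  by (simp add: exp_sum exp_of_nat_mult)

lemma side_lat_len_pos:
  fixes D :: "'n::finite \<Rightarrow> int \<times> int"
  assumes "\<forall>i. D i \<noteq> (0, 0)"
  shows "side_lat_len D i \<ge> 1"
proof -
  let ?a = "fst (D i)" and ?b = "snd (D i)"
  have dot: "?a * fst (side_vec D i) + ?b * snd (side_vec D i)
      = (\<Sum>j | same_side D i j. fst (D i) * fst (D j) + snd (D i) * snd (D j))"
    by (simp add: side_vec_def sum_distrib_left sum.distrib)
  have nz: "?a \<noteq> 0 \<or> ?b \<noteq> 0" using assms by (metis prod.collapse)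
  have ii: "i \<in> {j. same_side D i j}"
    using nz sum_squares_gt_zero_iff[of ?a ?b] by (simp add: same_side_def)
  have "0 < (\<Sum>j | same_side D i j. fst (D i) * fst (D j) + snd (D i) * snd (D j))"
    by (rule sum_pos2[OF _ ii]) (use nz sum_squares_gt_zero_iff[of ?a ?b] in \<open>auto simp: same_side_def less_imp_le\<close>)
  then have "side_vec D i \<noteq> (0, 0)" using dot by auto
  then have "gcd (fst (side_vec D i)) (snd (side_vec D i)) \<noteq> 0" by (metis gcd_eq_0_iff prod.collapse)
  then have "gcd (fst (side_vec D i)) (snd (side_vec D i)) > 0" by (simp add: order_le_neq_trans)
  then show ?thesis unfolding side_lat_len_def by linarith
qed



theorem lemma2p3:
  fixes D :: "'n::finite \<Rightarrow> int \<times> int" and c1 c2 \<rho> :: real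
  assumes "\<forall>i. D i \<noteq> (0, 0)"
    and "balanced D" and "nondegenerate D" and "even_family D"
    and "lambda_injective c1 c2"
    and "\<rho> > 0"
    and "\<forall>i. {t::real. 0 \<le> t \<and> t \<le> side_len D i \<and> \<rho> \<le> t \<and> \<rho> \<le> side_len D i - t} \<noteq> {}"
  shows "\<exists>P :: (real^'n) set. polytope P \<and> diffeomorphic_sets (closure (Men_rho D c1 c2 \<rho>)) P"
proof -
  define L where "L i = side_len D i" for i
  define l where "l i = side_lat_len D i" for i
  define m where "m i = kval D i div k0 D" for i
  define s where "s i = in_B1 D c1 c2 i" for i
  define cv :: "real^'n" where "cv = (\<chi> i. (if s i then 1 else -1) * real (m i))"
  define a where "a i = phi (l i) (L i) \<rho>" for i
  define b where "b i = phi (l i) (L i) (L i - \<rho>)" for i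
  define P where "P = {u::real^'n. (\<forall>i. a i \<le> u$i \<and> u$i \<le> b i) \<and> cv \<bullet> u = 0}"
  define f :: "real^'n \<Rightarrow> real^'n" where "f t = (\<chi> i. phi (l i) (L i) (t$i))" for t
  define g :: "real^'n \<Rightarrow> real^'n" where "g u = (\<chi> i. psi (l i) (L i) (u$i))" for u
  have l1: "l i \<ge> 1" for i unfolding l_def using side_lat_len_pos assms(1) by blast
  have Lrho: "2 * \<rho> \<le> L i" for i
  proof -
    obtain t where "\<rho> \<le> t" "\<rho> \<le> side_len D i - t" using assms(7) by blast
    then show ?thesis unfolding L_def by simp
  qed
  have Lpos: "L i > 0" for i using Lrho[of i] assms(6) by simp
  have r1: "0 < \<rho>" "\<rho> < L i" for i using Lrho[of i] assms(6) by auto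
  have r2: "0 < L i - \<rho>" "L i - \<rho> < L i" for i using Lrho[of i] assms(6) by auto
  have psi_a: "psi (l i) (L i) (a i) = \<rho>" for i
    unfolding a_def using psi_phi[OF l1[of i] Lpos[of i] r1(1) r1(2)[of i]] .
  have psi_b: "psi (l i) (L i) (b i) = L i - \<rho>" for i
    unfolding b_def using psi_phi[OF l1[of i] Lpos[of i] r2[of i]] .
  have box_iff: "(a i \<le> v \<and> v \<le> b i) \<longleftrightarrow> (\<rho> \<le> psi (l i) (L i) v \<and> psi (l i) (L i) v \<le> L i - \<rho>)" for i v
    using psi_le_iff[OF l1[of i] Lpos[of i], of "a i" v] psi_le_iff[OF l1[of i] Lpos[of i], of v "b i"] psi_a psi_b by simp
  have cvdot: "cv \<bullet> u = (\<Sum>i | s i. real (m i) * u $ i) - (\<Sum>i | \<not> s i. real (m i) * u $ i)" for u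
  proof -
    have "cv \<bullet> u = (\<Sum>i\<in>UNIV. if s i then real (m i) * u $ i else - (real (m i) * u $ i))"
      unfolding inner_vec_def cv_def by (intro sum.cong) auto
    also have "... = (\<Sum>i | s i. real (m i) * u $ i) + (\<Sum>i | \<not> s i. - (real (m i) * u $ i))"
      by (subst sum.If_cases) (auto simp: Collect_neg_eq)
    finally show ?thesis by (simp add: sum_negf)
  qed
  have eq_iff: "((\<Prod>i | in_B1 D c1 c2 i. xi_coord (side_lat_len D i) (side_len D i) (t $ i) ^ (kval D i div k0 D))
       = (\<Prod>i | \<not> in_B1 D c1 c2 i. xi_coord (side_lat_len D i) (side_len D i) (t $ i) ^ (kval D i div k0 D)))
      \<longleftrightarrow> cv \<bullet> f t = 0"
    if t: "\<And>i. 0 < t $ i \<and> t $ i < L i" for t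
  proof -
    have xi: "xi_coord (side_lat_len D i) (side_len D i) (t $ i) = exp (phi (l i) (L i) (t $ i))" for i
      using xi_coord_eq[OF l1[of i] Lpos[of i], of "t $ i"] t[of i] by (simp add: l_def L_def)
    have "(\<Prod>i | in_B1 D c1 c2 i. xi_coord (side_lat_len D i) (side_len D i) (t $ i) ^ (kval D i div k0 D))
        = exp (\<Sum>i | s i. real (m i) * f t $ i)"
      unfolding xi using prod_exp_pow[of "{i. s i}" "\<lambda>i. phi (l i) (L i) (t $ i)" m]
      by (simp add: s_def m_def f_def)
    moreover have "(\<Prod>i | \<not> in_B1 D c1 c2 i. xi_coord (side_lat_len D i) (side_len D i) (t $ i) ^ (kval D i div k0 D))
        = exp (\<Sum>i | \<not> s i. real (m i) * f t $ i)"
      unfolding xi using prod_exp_pow[of "{i. \<not> s i}" "\<lambda>i. phi (l i) (L i) (t $ i)" m]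
      by (simp add: s_def m_def f_def)
    ultimately show ?thesis by (simp add: cvdot)
  qed
  have Men: "Men_rho D c1 c2 \<rho> = {t. (\<forall>i. \<rho> \<le> t$i \<and> \<rho> \<le> L i - t$i) \<and> cv \<bullet> f t = 0}"
  proof (intro set_eqI iffI)
    fix t assume "t \<in> Men_rho D c1 c2 \<rho>"
    then have b: "\<forall>i. \<rho> \<le> t$i \<and> \<rho> \<le> L i - t$i" and e:
      "(\<Prod>i | in_B1 D c1 c2 i. xi_coord (side_lat_len D i) (side_len D i) (t $ i) ^ (kval D i div k0 D))
       = (\<Prod>i | \<not> in_B1 D c1 c2 i. xi_coord (side_lat_len D i) (side_len D i) (t $ i) ^ (kval D i div k0 D))"
      unfolding Men_rho_def L_def by auto
    have "\<And>i. 0 < t $ i \<and> t $ i < L i" using b assms(6) by (smt (verit))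
    then show "t \<in> {t. (\<forall>i. \<rho> \<le> t$i \<and> \<rho> \<le> L i - t$i) \<and> cv \<bullet> f t = 0}"
      using eq_iff e b by blast
  next
    fix t assume "t \<in> {t. (\<forall>i. \<rho> \<le> t$i \<and> \<rho> \<le> L i - t$i) \<and> cv \<bullet> f t = 0}"
    then have b: "\<forall>i. \<rho> \<le> t$i \<and> \<rho> \<le> L i - t$i" and e: "cv \<bullet> f t = 0" by auto
    have "\<And>i. 0 < t $ i \<and> t $ i < L i" using b assms(6) by (smt (verit))
    then show "t \<in> Men_rho D c1 c2 \<rho>" using eq_iff e b unfolding Men_rho_def L_def by auto
  qed
  have fP: "f t \<in> P \<and> g (f t) = t" if t: "t \<in> Men_rho D c1 c2 \<rho>" for t
  proof -
    have b: "\<forall>i. \<rho> \<le> t$i \<and> \<rho> \<le> L i - t$i" and e: "cv \<bullet> f t = 0" using t Men by auto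
    have t0: "0 < t $ i" "t $ i < L i" for i using b assms(6) by (smt (verit))+
    have pp: "psi (l i) (L i) (f t $ i) = t $ i" for i
      using psi_phi[OF l1[of i] Lpos[of i] t0[of i]] by (simp add: f_def)
    have "a i \<le> f t $ i \<and> f t $ i \<le> b i" for i using box_iff pp b by (smt (verit))
    then have "f t \<in> P" using e by (simp add: P_def)
    moreover have "g (f t) = t" using pp by (simp add: g_def vec_eq_iff)
    ultimately show ?thesis by simp
  qed
  have gP: "g u \<in> Men_rho D c1 c2 \<rho> \<and> f (g u) = u" if u: "u \<in> P" for u
  proof -
    have fg: "f (g u) = u" by (simp add: f_def g_def phi_psi[OF l1 Lpos] vec_eq_iff)
    have "\<rho> \<le> g u $ i \<and> \<rho> \<le> L i - g u $ i" for i
      using u box_iff[of i "u $ i"] by (auto simp: P_def g_def)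
    then have "g u \<in> Men_rho D c1 c2 \<rho>" unfolding Men using fg u by (simp add: P_def)
    then show ?thesis using fg by simp
  qed
  have MgP: "Men_rho D c1 c2 \<rho> = g ` P"
  proof
    show "Men_rho D c1 c2 \<rho> \<subseteq> g ` P" using fP by (metis image_eqI subsetI)
    show "g ` P \<subseteq> Men_rho D c1 c2 \<rho>" using gP by blast
  qed
  have polyP: "polytope P"
  proof -
    have "P = (\<Inter>i. {u. (axis i 1) \<bullet> u \<le> b i} \<inter> {u. (axis i 1) \<bullet> u \<ge> a i}) \<inter> {u. cv \<bullet> u = 0}"
      by (auto simp: P_def inner_axis')
    moreover have "polyhedron ((\<Inter>i. {u::real^'n. (axis i 1) \<bullet> u \<le> b i} \<inter> {u. (axis i 1) \<bullet> u \<ge> a i}) \<inter> {u. cv \<bullet> u = 0})"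
      by (intro polyhedron_Int polyhedron_Inter polyhedron_halfspace_le polyhedron_halfspace_ge polyhedron_hyperplane)
         (auto intro!: polyhedron_Int polyhedron_halfspace_le polyhedron_halfspace_ge)
    ultimately have "polyhedron P" by simp
    moreover have "bounded P"
    proof (rule bounded_subset[OF bounded_cbox])
      show "P \<subseteq> cbox (\<chi> i. a i) (\<chi> i. b i)" by (auto simp: P_def mem_box_cart)
    qed
    ultimately show ?thesis by (simp add: polytope_eq_bounded_polyhedron)
  qed
  have pc: "continuous_on UNIV (psi (l i) (L i))" for i
    by (rule continuous_at_imp_continuous_on) (simp add: psi_cont[OF l1[of i] Lpos[of i]])
  have contg: "continuous_on UNIV g"
    unfolding g_def by (intro continuous_on_vec_lambda continuous_on_compose2[OF pc continuous_on_component[OF continuous_on_id]]) auto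
  have "compact (Men_rho D c1 c2 \<rho>)"
    unfolding MgP by (rule compact_continuous_image[OF continuous_on_subset[OF contg] polytope_imp_compact[OF polyP]]) simp
  then have cl: "closure (Men_rho D c1 c2 \<rho>) = Men_rho D c1 c2 \<rho>" by (simp add: compact_imp_closed)
  define Lv :: "real^'n" where "Lv = (\<chi> i. L i)"
  have sf: "smooth_on_set (Men_rho D c1 c2 \<rho>) f"
    unfolding smooth_on_set_def
  proof (intro exI conjI)
    show "open (box 0 Lv)" by (rule open_box)
    show "Men_rho D c1 c2 \<rho> \<subseteq> box 0 Lv"
    proof
      fix t assume "t \<in> Men_rho D c1 c2 \<rho>"
      then have b: "\<forall>i. \<rho> \<le> t$i \<and> \<rho> \<le> L i - t$i" using Men by auto
      then show "t \<in> box 0 Lv" using assms(6) by (auto simp: mem_box_cart Lv_def) (smt (verit))+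
    qed
    show "smooth_map_on (box 0 Lv) f"
      unfolding smooth_map_on_def
    proof (intro conjI allI)
      fix j
      have "smooth_scalar_on (box 0 Lv) (\<lambda>x. phi (l j) (L j) (x $ j))"
        by (rule smooth_coord[where I = "{0<..<L j}"]) (auto simp: phi_smooth[OF l1 Lpos] mem_box_cart Lv_def)
      then show "smooth_scalar_on (box 0 Lv) (\<lambda>x. f x $ j)" by (simp add: f_def)
    qed (rule open_box)
  qed simp
  have sg: "smooth_on_set P g"
    unfolding smooth_on_set_def
  proof (intro exI conjI)
    show "smooth_map_on UNIV g"
      unfolding smooth_map_on_def
    proof (intro conjI allI)
      fix j
      have "smooth_scalar_on UNIV (\<lambda>x::real^'n. psi (l j) (L j) (x $ j))"
        by (rule smooth_coord[where I = UNIV]) (auto simp: psi_smooth[OF l1 Lpos])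
      then show "smooth_scalar_on UNIV (\<lambda>x. g x $ j)" by (simp add: g_def)
    qed simp
  qed auto
  have "diffeomorphic_sets (closure (Men_rho D c1 c2 \<rho>)) P"
    unfolding cl diffeomorphic_sets_def using sf sg fP gP by blast
  then show ?thesis using polyP by blast
qed


end
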